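(* Let $\mathbf{\Pi}=\langle\mathit{PF},\Pi\rangle$ be a multi-valued probabilistic program such that $\mathrm{SM}''[\mathbf{\Pi}]$ is not empty and $M_{\mathbf{\Pi}}(c=v)>0$ for every probabilistic constant $c$ and every $v\in\mathrm{Dom}(c)$. Then for every interpretation $I$, $I\in\mathrm{SM}'[T(\mathbf{\Pi})]$ if and only if $I\in\mathrm{SM}''[\mathbf{\Pi}]$.
   Context: Stable model semantics: a rule is $A\leftarrow B\wedge N$ ($A$ a possibly empty disjunction of atoms, $B$ a conjunction of atoms, $N$ a formula with every atom occurrence under negation); the reduct $\Pi^I$ of a ground program keeps $A\leftarrow B$ for rules with $I\models N$; $I$ (a set of atoms) is a stable model if it is a minimal model of $\Pi^I$. An $\mathrm{LP}^{\mathrm{MLN}}$ program $\Pi$ is a finite set of weighted rules $w:R$, $w$ real (soft) or the symbol $\alpha$ (hard); $\Pi_I=\{w:R\in\Pi\mid I\models R\}$; $\overline{\cdot}$ drops weights. $\mathrm{SM}'[\Pi]$ is the set of $I$ that are stable models of $\overline{\Pi_I}$ and satisfy $\overline{\Pi^{\rm hard}}$ (the unweighted hard rules). Multi-valued signature: constants $c$ with finite domains $\mathrm{Dom}(c)$; atoms $c=v$, $v\in\mathrm{Dom}(c)$; constants are probabilistic or regular. A multi-valued probabilistic program $\mathbf{\Pi}=\langle\mathit{PF},\Pi\rangle$: $\mathit{PF}$ has, for each probabilistic constant $c$, one declaration $p_1:c=v_1\mid\dots\mid p_n:c=v_n$ ($\{v_i\}=\mathrm{Dom}(c)$ distinct,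 $p_i\in[0,1]$, $\sum p_i=1$), and $M_{\mathbf{\Pi}}(c=v_i)=p_i$; $\Pi$ is a set of rules whose heads contain no atom of a probabilistic constant. $T(\mathbf{\Pi})$ is the $\mathrm{LP}^{\mathrm{MLN}}$ program containing: $\ln(p_i):c=v_i$ if $0<p_i<1$, $\alpha:c=v_i$ if $p_i=1$, $\alpha:\bot\leftarrow c=v_i$ if $p_i=0$; $\alpha:R$ for $R\in\Pi$; $\alpha:\bot\leftarrow c=v_1\wedge c=v_2$ for every constant $c$ and distinct $v_1,v_2\in\mathrm{Dom}(c)$; $\alpha:\bot\leftarrow\neg\bigvee_{v\in\mathrm{Dom}(c)}c=v$ for every probabilistic $c$. $I$ is consistent if it satisfies the last two kinds of constraints; $\mathit{TC}(I)=\{c=v\in I\mid c$ probabilistic$\}$; $\mathrm{SM}''[\mathbf{\Pi}]$ is the set of consistent $I$ that are stable models of $\Pi\cup\mathit{TC}(I)$. *)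

theory Defs
  imports Complex_Main
begin

datatype 'a fml = FAtom 'a | FNeg "'a fml" | FAnd "'a fml list" | FOr "'a fml list"

abbreviation FTop :: "'a fml" where "FTop \<equiv> FAnd []"
abbreviation FBot :: "'a fml" where "FBot \<equiv> FOr []"

fun sat_fml :: "'a set \<Rightarrow> 'a fml \<Rightarrow> bool" where
  "sat_fml I (FAtom a) = (a \<in> I)"
| "sat_fml I (FNeg f) = (\<not> sat_fml I f)"
| "sat_fml I (FAnd fs) = (\<forall>f\<in>set fs. sat_fml I f)"
| "sat_fml I (FOr fs) = (\<exists>f\<in>set fs. sat_fml I f)"

fun atoms_fml :: "'a fml \<Rightarrow> 'a set" where
  "atoms_fml (FAtom a) = {a}"
| "atoms_fml (FNeg f) = atoms_fml f"
| "atoms_fml (FAnd fs) = (\<Union>f\<in>set fs. atoms_fml f)"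
| "atoms_fml (FOr fs) = (\<Union>f\<in>set fs. atoms_fml f)"

fun unneg_atoms :: "'a fml \<Rightarrow> 'a set" where
  "unneg_atoms (FAtom a) = {a}"
| "unneg_atoms (FNeg f) = {}"
| "unneg_atoms (FAnd fs) = (\<Union>f\<in>set fs. unneg_atoms f)"
| "unneg_atoms (FOr fs) = (\<Union>f\<in>set fs. unneg_atoms f)"

text \<open>A rule  A \<leftarrow> B \<and> N : head = atoms of the disjunction A, pbody = atoms of the
  conjunction B, nbody = N.\<close>
datatype 'a rule = Rule (head: "'a set") (pbody: "'a set") (nbody: "'a fml")

definition wf_rule :: "'a rule \<Rightarrow> bool" where
  "wf_rule R \<longleftrightarrow> finite (head R) \<and> finite (pbody R) \<and> unneg_atoms (nbody R) = {}"

definition rule_atoms :: "'a rule \<Rightarrow> 'a set" where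
  "rule_atoms R = head R \<union> pbody R \<union> atoms_fml (nbody R)"

definition sat_rule :: "'a set \<Rightarrow> 'a rule \<Rightarrow> bool" where
  "sat_rule I R \<longleftrightarrow> (pbody R \<subseteq> I \<and> sat_fml I (nbody R) \<longrightarrow> head R \<inter> I \<noteq> {})"

definition reduct :: "'a rule set \<Rightarrow> 'a set \<Rightarrow> ('a set \<times> 'a set) set" where
  "reduct P I = {(head R, pbody R) | R. R \<in> P \<and> sat_fml I (nbody R)}"

definition pos_model :: "('a set \<times> 'a set) set \<Rightarrow> 'a set \<Rightarrow> bool" where
  "pos_model Q J \<longleftrightarrow> (\<forall>(A, B)\<in>Q. B \<subseteq> J \<longrightarrow> A \<inter> J \<noteq> {})"

definition stable_model :: "'a rule set \<Rightarrow> 'a set \<Rightarrow> bool" where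
  "stable_model P I \<longleftrightarrow> pos_model (reduct P I) I \<and> (\<forall>J. J \<subset> I \<longrightarrow> \<not> pos_model (reduct P I) J)"

datatype weight = Soft real | Hard

type_synonym 'a lpmln = "('a rule \<times> weight) set"

definition SM' :: "'a lpmln \<Rightarrow> 'a set set" where
  "SM' P = {I. stable_model (fst ` {wr \<in> P. sat_rule I (fst wr)}) I
              \<and> (\<forall>wr\<in>P. snd wr = Hard \<longrightarrow> sat_rule I (fst wr))}"

text \<open>Signature: constants C (finite), probabilistic constants Cp \<subseteq> C, domains Dom;
  the atom c = v is the pair (c, v) with v \<in> Dom c.  The probability declarations PF
  are given by a function p, with M(c = v) = p c v.\<close>

definition sig_atoms :: "'c set \<Rightarrow> ('c \<Rightarrow> 'v set) \<Rightarrow> ('c \<times> 'v) set" where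
  "sig_atoms C Dom = {(c, v). c \<in> C \<and> v \<in> Dom c}"

definition mv_prob_program ::
  "'c set \<Rightarrow> 'c set \<Rightarrow> ('c \<Rightarrow> 'v set) \<Rightarrow> ('c \<Rightarrow> 'v \<Rightarrow> real) \<Rightarrow> ('c \<times> 'v) rule set \<Rightarrow> bool" where
  "mv_prob_program C Cp Dom p P \<longleftrightarrow>
     finite C \<and> Cp \<subseteq> C \<and> (\<forall>c\<in>C. finite (Dom c))
   \<and> (\<forall>c\<in>Cp. (\<forall>v\<in>Dom c. 0 \<le> p c v \<and> p c v \<le> 1) \<and> (\<Sum>v\<in>Dom c. p c v) = 1)
   \<and> finite P
   \<and> (\<forall>R\<in>P. wf_rule R \<and> rule_atoms R \<subseteq> sig_atoms C Dom
            \<and> (\<forall>(c, v)\<in>head R. c \<notin> Cp))"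

definition fact :: "'a \<Rightarrow> 'a rule" where
  "fact a = Rule {a} {} FTop"

definition some_enum :: "'v set \<Rightarrow> 'v list" where
  "some_enum S = (SOME xs. set xs = S \<and> distinct xs)"

definition T ::
  "'c set \<Rightarrow> 'c set \<Rightarrow> ('c \<Rightarrow> 'v set) \<Rightarrow> ('c \<Rightarrow> 'v \<Rightarrow> real) \<Rightarrow> ('c \<times> 'v) rule set
   \<Rightarrow> ('c \<times> 'v) lpmln" where
  "T C Cp Dom p P =
     {(fact (c, v), Soft (ln (p c v))) | c v. c \<in> Cp \<and> v \<in> Dom c \<and> 0 < p c v \<and> p c v < 1}
   \<union> {(fact (c, v), Hard) | c v. c \<in> Cp \<and> v \<in> Dom c \<and> p c v = 1}
   \<union> {(Rule {} {(c, v)} FTop, Hard) | c v. c \<in> Cp \<and> v \<in> Dom c \<and> p c v = 0}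
   \<union> {(R, Hard) | R. R \<in> P}
   \<union> {(Rule {} {(c, v1), (c, v2)} FTop, Hard) | c v1 v2. c \<in> C \<and> v1 \<in> Dom c \<and> v2 \<in> Dom c \<and> v1 \<noteq> v2}
   \<union> {(Rule {} {} (FNeg (FOr (map (\<lambda>v. FAtom (c, v)) (some_enum (Dom c))))), Hard) | c. c \<in> Cp}"

definition consistent :: "'c set \<Rightarrow> 'c set \<Rightarrow> ('c \<Rightarrow> 'v set) \<Rightarrow> ('c \<times> 'v) set \<Rightarrow> bool" where
  "consistent C Cp Dom I \<longleftrightarrow>
     (\<forall>c\<in>C. \<forall>v1\<in>Dom c. \<forall>v2\<in>Dom c. v1 \<noteq> v2 \<longrightarrow> \<not> ((c, v1) \<in> I \<and> (c, v2) \<in> I))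
   \<and> (\<forall>c\<in>Cp. \<exists>v\<in>Dom c. (c, v) \<in> I)"

definition TC :: "'c set \<Rightarrow> ('c \<times> 'v) set \<Rightarrow> ('c \<times> 'v) set" where
  "TC Cp I = {(c, v) \<in> I. c \<in> Cp}"

definition SM'' :: "'c set \<Rightarrow> 'c set \<Rightarrow> ('c \<Rightarrow> 'v set) \<Rightarrow> ('c \<times> 'v) rule set \<Rightarrow> ('c \<times> 'v) set set" where
  "SM'' C Cp Dom P = {I. consistent C Cp Dom I \<and> stable_model (P \<union> fact ` TC Cp I) I}"

end

theory Submission
  imports Defs
begin

lemma reduct_mem: "(A, B) \<in> reduct Q I \<longleftrightarrow> (\<exists>R\<in>Q. A = head R \<and> B = pbody R \<and> sat_fml I (nbody R))"
  unfolding reduct_def by blast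

lemma pos_model_iff: "pos_model Q J \<longleftrightarrow> (\<forall>A B. (A, B) \<in> Q \<longrightarrow> B \<subseteq> J \<longrightarrow> A \<inter> J \<noteq> {})"
  unfolding pos_model_def by blast

lemma pos_model_red: "pos_model (reduct Q I) J \<longleftrightarrow>
   (\<forall>R\<in>Q. sat_fml I (nbody R) \<longrightarrow> pbody R \<subseteq> J \<longrightarrow> head R \<inter> J \<noteq> {})"
  unfolding pos_model_iff reduct_mem by fast

lemma pos_model_eq:
  assumes "\<forall>R\<in>Q. sat_rule I R" "Q2 \<subseteq> Q" "\<forall>R\<in>Q - Q2. head R = {}" "J \<subseteq> I"
  shows "pos_model (reduct Q I) J \<longleftrightarrow> pos_model (reduct Q2 I) J"
  unfolding pos_model_red
proof (intro iffI ballI impI)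
  fix R assume "\<forall>R\<in>Q. sat_fml I (nbody R) \<longrightarrow> pbody R \<subseteq> J \<longrightarrow> head R \<inter> J \<noteq> {}"
    "R \<in> Q2" "sat_fml I (nbody R)" "pbody R \<subseteq> J"
  then show "head R \<inter> J \<noteq> {}" using assms(2) by blast
next
  fix R assume h: "\<forall>R\<in>Q2. sat_fml I (nbody R) \<longrightarrow> pbody R \<subseteq> J \<longrightarrow> head R \<inter> J \<noteq> {}"
    and R: "R \<in> Q" "sat_fml I (nbody R)" "pbody R \<subseteq> J"
  show "head R \<inter> J \<noteq> {}"
  proof (cases "R \<in> Q2")
    case True
    then show ?thesis using h R by blast
  next
    case False
    then have "head R = {}" using assms(3) R by blast
    moreover have "sat_rule I R" using assms(1) R by blast
    ultimately show ?thesis using R assms(4) unfolding sat_rule_def by blast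
  qed
qed

lemma stable_eq:
  assumes "\<forall>R\<in>Q. sat_rule I R" "Q2 \<subseteq> Q" "\<forall>R\<in>Q - Q2. head R = {}"
  shows "stable_model Q I \<longleftrightarrow> stable_model Q2 I"
proof -
  have e: "pos_model (reduct Q I) J \<longleftrightarrow> pos_model (reduct Q2 I) J" if "J \<subseteq> I" for J
    using pos_model_eq[OF assms that] .
  have a: "(J \<subset> I \<longrightarrow> \<not> pos_model (reduct Q I) J) = (J \<subset> I \<longrightarrow> \<not> pos_model (reduct Q2 I) J)" for J
  proof (cases "J \<subset> I")
    case True
    then have "J \<subseteq> I" by (rule less_imp_le)
    then have "pos_model (reduct Q I) J = pos_model (reduct Q2 I) J" by (rule e)
    then show ?thesis by (simp only:)
  next
    case False
    then show ?thesis by (simp only: simp_thms)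
  qed
  have b: "pos_model (reduct Q I) I = pos_model (reduct Q2 I) I" by (rule e[OF order_refl])
  show ?thesis unfolding stable_model_def a b ..
qed

lemma stable_sat:
  assumes "stable_model Q I" "R \<in> Q" shows "sat_rule I R"
proof -
  have "pos_model (reduct Q I) I" using assms(1) unfolding stable_model_def by (rule conjunct1)
  then show ?thesis using assms(2) unfolding pos_model_red sat_rule_def by blast
qed

lemma some_enum_set: "finite S \<Longrightarrow> set (some_enum S) = S"
  unfolding some_enum_def
  by (metis (mono_tags, lifting) finite_distinct_list someI_ex)

lemma sat_fact: "sat_rule I (fact a) \<longleftrightarrow> a \<in> I"
  unfolding sat_rule_def fact_def by auto

lemma p_one:
  assumes "finite D" "\<forall>w\<in>D. (0::real) < f w" "(\<Sum>w\<in>D. f w) = 1" "v \<in> D" "f v = 1"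
  shows "D = {v}"
proof (rule ccontr)
  assume "D \<noteq> {v}"
  then obtain w where w: "w \<in> D" "w \<noteq> v" using assms(4) by blast
  have "(\<Sum>w\<in>D. f w) = f v + (\<Sum>w\<in>D - {v}. f w)"
    using assms(1,4) by (simp add: sum.remove)
  moreover have "(\<Sum>w\<in>D - {v}. f w) > 0"
    using w assms(1,2) by (intro sum_pos2[where i=w]) auto
  ultimately show False using assms(3,5) by simp
qed

lemma T_P: "R \<in> P \<Longrightarrow> (R, Hard) \<in> T C Cp Dom p P"
  unfolding T_def by (intro UnI1 UnI2 CollectI) blast
lemma T_uniq: "c \<in> C \<Longrightarrow> v1 \<in> Dom c \<Longrightarrow> v2 \<in> Dom c \<Longrightarrow> v1 \<noteq> v2 \<Longrightarrow>
   (Rule {} {(c, v1), (c, v2)} FTop, Hard) \<in> T C Cp Dom p P"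
  unfolding T_def by (rule UnI1, rule UnI2) blast
lemma T_ex: "c \<in> Cp \<Longrightarrow>
   (Rule {} {} (FNeg (FOr (map (\<lambda>v. FAtom (c, v)) (some_enum (Dom c))))), Hard) \<in> T C Cp Dom p P"
  unfolding T_def by (rule UnI2) blast
lemma T_soft: "c \<in> Cp \<Longrightarrow> v \<in> Dom c \<Longrightarrow> 0 < p c v \<Longrightarrow> p c v < 1 \<Longrightarrow>
   (fact (c, v), Soft (ln (p c v))) \<in> T C Cp Dom p P"
  unfolding T_def by (rule UnI1, rule UnI1, rule UnI1, rule UnI1, rule UnI1) blast
lemma T_hardf: "c \<in> Cp \<Longrightarrow> v \<in> Dom c \<Longrightarrow> p c v = 1 \<Longrightarrow>
   (fact (c, v), Hard) \<in> T C Cp Dom p P"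
  unfolding T_def by (rule UnI1, rule UnI1, rule UnI1, rule UnI1, rule UnI2) blast
lemma T_cases:
  assumes "(R, w) \<in> T C Cp Dom p P"
  shows "(\<exists>c v. c \<in> Cp \<and> v \<in> Dom c \<and> R = fact (c, v) \<and>
            ((0 < p c v \<and> p c v < 1 \<and> w = Soft (ln (p c v))) \<or> (p c v = 1 \<and> w = Hard)))
   \<or> (\<exists>c v. c \<in> Cp \<and> v \<in> Dom c \<and> p c v = 0 \<and> R = Rule {} {(c, v)} FTop \<and> w = Hard)
   \<or> (R \<in> P \<and> w = Hard)
   \<or> (\<exists>c v1 v2. c \<in> C \<and> v1 \<in> Dom c \<and> v2 \<in> Dom c \<and> v1 \<noteq> v2 \<and>
          R = Rule {} {(c, v1), (c, v2)} FTop \<and> w = Hard)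
   \<or> (\<exists>c. c \<in> Cp \<and> R = Rule {} {} (FNeg (FOr (map (\<lambda>v. FAtom (c, v)) (some_enum (Dom c))))) \<and> w = Hard)"
  using assms unfolding T_def by (elim UnE; blast)

lemma inQ: "(R, w) \<in> X \<Longrightarrow> sat_rule I R \<Longrightarrow> R \<in> fst ` {wr \<in> X. sat_rule I (fst wr)}"
  by (rule image_eqI[of _ _ "(R, w)"]) auto

lemma Qe: "R \<in> fst ` {wr \<in> X. sat_rule I (fst wr)} \<Longrightarrow> \<exists>w. (R, w) \<in> X \<and> sat_rule I R"
  by force

theorem lemma7:
  fixes C Cp :: "'c set" and Dom :: "'c \<Rightarrow> 'v set" and p :: "'c \<Rightarrow> 'v \<Rightarrow> real"
    and P :: "('c \<times> 'v) rule set" and I :: "('c \<times> 'v) set"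
  assumes "mv_prob_program C Cp Dom p P"
    and "SM'' C Cp Dom P \<noteq> {}"
    and "\<forall>c\<in>Cp. \<forall>v\<in>Dom c. p c v > 0"
    and "I \<subseteq> sig_atoms C Dom"
  shows "I \<in> SM' (T C Cp Dom p P) \<longleftrightarrow> I \<in> SM'' C Cp Dom P"
proof -
  note prog = assms(1)[unfolded mv_prob_program_def]
  have finD: "\<And>c. c \<in> Cp \<Longrightarrow> finite (Dom c)" using prog by blast
  have pl1: "\<And>c v. c \<in> Cp \<Longrightarrow> v \<in> Dom c \<Longrightarrow> p c v \<le> 1" using prog by blast
  have psum: "\<And>c. c \<in> Cp \<Longrightarrow> (\<Sum>v\<in>Dom c. p c v) = 1" using prog by blast
  have pos: "\<And>c v. c \<in> Cp \<Longrightarrow> v \<in> Dom c \<Longrightarrow> p c v > 0" using assms(3) by blast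
  have sig: "\<And>c v. (c, v) \<in> I \<Longrightarrow> v \<in> Dom c" using assms(4) unfolding sig_atoms_def by blast
  define TT where "TT = T C Cp Dom p P"
  define Q where "Q = fst ` {wr \<in> TT. sat_rule I (fst wr)}"
  define Q2 where "Q2 = P \<union> fact ` TC Cp I"
  have Qsat: "\<forall>R\<in>Q. sat_rule I R" unfolding Q_def by auto
  have rest: "\<forall>R\<in>Q - Q2. head R = {}"
  proof
    fix R assume R: "R \<in> Q - Q2"
    then obtain w where w: "(R, w) \<in> TT" "sat_rule I R" unfolding Q_def using Qe by blast
    show "head R = {}"
    proof (rule ccontr)
      assume ne: "head R \<noteq> {}"
      have "(\<exists>c v. R = fact (c, v) \<and> c \<in> Cp) \<or> R \<in> P"
        using T_cases[OF w(1)[unfolded TT_def]]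
      proof (elim disjE exE conjE)
      qed (use ne in auto)
      then show False
      proof
        assume "\<exists>c v. R = fact (c, v) \<and> c \<in> Cp"
        then obtain c v where cv: "R = fact (c, v)" "c \<in> Cp" by blast
        then have "(c, v) \<in> I" using w(2) by (simp add: sat_fact)
        then have "R \<in> Q2" using cv unfolding Q2_def TC_def by auto
        then show False using R by blast
      next
        assume "R \<in> P" then show False using R unfolding Q2_def by blast
      qed
    qed
  qed
  have hard_of: "\<forall>wr\<in>TT. snd wr = Hard \<longrightarrow> sat_rule I (fst wr)"
    if c: "consistent C Cp Dom I" and ps: "\<forall>R\<in>P. sat_rule I R"
  proof (intro ballI impI)
    fix wr assume wr: "wr \<in> TT" "snd wr = Hard"
    obtain R w where Rw: "wr = (R, w)" by (cases wr)
    have cs: "(\<exists>c v. c \<in> Cp \<and> v \<in> Dom c \<and> R = fact (c, v) \<and>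
            ((0 < p c v \<and> p c v < 1 \<and> w = Soft (ln (p c v))) \<or> (p c v = 1 \<and> w = Hard)))
   \<or> (\<exists>c v. c \<in> Cp \<and> v \<in> Dom c \<and> p c v = 0 \<and> R = Rule {} {(c, v)} FTop \<and> w = Hard)
   \<or> (R \<in> P \<and> w = Hard)
   \<or> (\<exists>c v1 v2. c \<in> C \<and> v1 \<in> Dom c \<and> v2 \<in> Dom c \<and> v1 \<noteq> v2 \<and>
          R = Rule {} {(c, v1), (c, v2)} FTop \<and> w = Hard)
   \<or> (\<exists>c. c \<in> Cp \<and> R = Rule {} {} (FNeg (FOr (map (\<lambda>v. FAtom (c, v)) (some_enum (Dom c))))) \<and> w = Hard)"
      using wr(1) unfolding Rw TT_def by (rule T_cases)
    have wH: "w = Hard" using wr(2) Rw by simp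
    have "sat_rule I R"
      using cs
    proof (elim disjE exE conjE)
      fix c v assume "c \<in> Cp" "v \<in> Dom c" "R = fact (c, v)" "w = Soft (ln (p c v))"
      then show ?thesis using wH by simp
    next
      fix c v assume cv: "c \<in> Cp" "v \<in> Dom c" "R = fact (c, v)" and p1: "p c v = 1"
      have "Dom c = {v}"
        using p_one[of "Dom c" "p c" v] finD[OF cv(1)] pos[OF cv(1)] cv psum[OF cv(1)] p1 by blast
      moreover have "\<exists>w\<in>Dom c. (c, w) \<in> I" using c cv(1) unfolding consistent_def by blast
      ultimately have "(c, v) \<in> I" by simp
      then show ?thesis using cv(3) by (simp add: sat_fact)
    next
      fix c v assume "c \<in> Cp" "v \<in> Dom c" "p c v = 0"
      then show ?thesis using pos by force
    next
      assume "R \<in> P" then show ?thesis using ps by blast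
    next
      fix c v1 v2 assume a: "c \<in> C" "v1 \<in> Dom c" "v2 \<in> Dom c" "v1 \<noteq> v2"
        "R = Rule {} {(c, v1), (c, v2)} FTop"
      then show ?thesis using c unfolding consistent_def sat_rule_def by auto
    next
      fix cc assume a: "cc \<in> Cp" "R = Rule {} {} (FNeg (FOr (map (\<lambda>v. FAtom (cc, v)) (some_enum (Dom cc)))))"
      then show ?thesis using c some_enum_set[OF finD[OF a(1)]] unfolding consistent_def sat_rule_def
        by auto
    qed
    then show "sat_rule I (fst wr)" using Rw by simp
  qed
  have cons_of: "consistent C Cp Dom I \<and> (\<forall>R\<in>P. sat_rule I R)"
    if h: "\<forall>wr\<in>TT. snd wr = Hard \<longrightarrow> sat_rule I (fst wr)"
  proof -
    have u: "\<not> ((c, v1) \<in> I \<and> (c, v2) \<in> I)"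
      if a: "c \<in> C" "v1 \<in> Dom c" "v2 \<in> Dom c" "v1 \<noteq> v2" for c v1 v2
    proof -
      let ?R = "Rule {} {(c, v1), (c, v2)} FTop :: ('c \<times> 'v) rule"
      have inT: "(?R, Hard) \<in> TT" unfolding TT_def using a by (rule T_uniq)
      then have "sat_rule I ?R" using h[rule_format, OF inT] by simp
      then show ?thesis unfolding sat_rule_def by auto
    qed
    have e: "\<exists>v\<in>Dom c. (c, v) \<in> I" if a: "c \<in> Cp" for c
    proof -
      let ?R = "Rule {} {} (FNeg (FOr (map (\<lambda>v. FAtom (c, v)) (some_enum (Dom c))))) :: ('c \<times> 'v) rule"
      have inT: "(?R, Hard) \<in> TT" unfolding TT_def using a by (rule T_ex)
      then have "sat_rule I ?R" using h[rule_format, OF inT] by simp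
      then show ?thesis using some_enum_set[OF finD[OF a]] unfolding sat_rule_def by auto
    qed
    have "\<forall>R\<in>P. sat_rule I R"
    proof
      fix R assume "R \<in> P"
      then have "(R, Hard) \<in> TT" unfolding TT_def by (rule T_P)
      then show "sat_rule I R" using h[rule_format, of "(R, Hard)"] by simp
    qed
    moreover have "consistent C Cp Dom I" unfolding consistent_def
    proof (intro conjI ballI impI)
      fix c v1 v2 assume "c \<in> C" "v1 \<in> Dom c" "v2 \<in> Dom c" "v1 \<noteq> v2"
      then show "\<not> ((c, v1) \<in> I \<and> (c, v2) \<in> I)" by (rule u)
    next
      fix c assume "c \<in> Cp" then show "\<exists>v\<in>Dom c. (c, v) \<in> I" by (rule e)
    qed
    ultimately show ?thesis by (rule conjI[rotated])
  qed
  have facts_in: "fact ` TC Cp I \<subseteq> Q"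
  proof
    fix R assume "R \<in> fact ` TC Cp I"
    then obtain c v where cv: "R = fact (c, v)" "c \<in> Cp" "(c, v) \<in> I" unfolding TC_def by auto
    have vd: "v \<in> Dom c" using sig cv(3) .
    have sr: "sat_rule I R" using cv by (simp add: sat_fact)
    show "R \<in> Q"
    proof (cases "p c v = 1")
      case True
      then have "(R, Hard) \<in> TT" unfolding TT_def cv(1) using cv(2) vd by (intro T_hardf)
      then show ?thesis unfolding Q_def by (rule inQ[OF _ sr])
    next
      case False
      then have "p c v < 1" using pl1[OF cv(2) vd] by simp
      then have "(R, Soft (ln (p c v))) \<in> TT" unfolding TT_def cv(1)
        using cv(2) vd pos[OF cv(2) vd] by (intro T_soft)
      then show ?thesis unfolding Q_def by (rule inQ[OF _ sr])
    qed
  qed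
  have P_in: "P \<subseteq> Q" if ps: "\<forall>R\<in>P. sat_rule I R"
  proof
    fix R assume R: "R \<in> P"
    then have "(R, Hard) \<in> TT" unfolding TT_def by (rule T_P)
    then show "R \<in> Q" unfolding Q_def by (rule inQ) (use ps R in blast)
  qed
  show ?thesis
  proof
    assume "I \<in> SM' (T C Cp Dom p P)"
    then have st: "stable_model Q I" and h: "\<forall>wr\<in>TT. snd wr = Hard \<longrightarrow> sat_rule I (fst wr)"
      unfolding SM'_def Q_def TT_def mem_Collect_eq by (rule conjunct1, rule conjunct2)
    from cons_of[OF h] have c: "consistent C Cp Dom I" and ps: "\<forall>R\<in>P. sat_rule I R" by auto
    have "Q2 \<subseteq> Q" unfolding Q2_def using P_in[OF ps] facts_in by blast
    then have "stable_model Q2 I" using stable_eq[OF Qsat _ rest] st by blast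
    then show "I \<in> SM'' C Cp Dom P" unfolding SM''_def Q2_def using c by blast
  next
    assume "I \<in> SM'' C Cp Dom P"
    then have c: "consistent C Cp Dom I" and st: "stable_model Q2 I"
      unfolding SM''_def Q2_def mem_Collect_eq by (rule conjunct1, rule conjunct2)
    have ps: "\<forall>R\<in>P. sat_rule I R" using stable_sat[OF st] unfolding Q2_def by blast
    have "Q2 \<subseteq> Q" unfolding Q2_def using P_in[OF ps] facts_in by blast
    then have "stable_model Q I" using stable_eq[OF Qsat _ rest] st by blast
    then show "I \<in> SM' (T C Cp Dom p P)" unfolding SM'_def Q_def TT_def[symmetric] using hard_of[OF c ps] by blast
  qed
qed

end
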